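(* Let $G$ be a graph on $n$ vertices with $\mu(G)<\delta(G)$. Then $n\ge 2\delta(G)-3$. If moreover $n=2\delta(G)-3$, then $\mu(G)=\delta(G)-1$.
   Context: All graphs are finite and simple; $\delta(G)$ is the minimum degree. For a graph $G=(V,E)$ on $n$ vertices, a fractional vertex cover is a function $f:V\to[0,\infty)$ with $f(u)+f(v)\ge 1$ for every edge $uv\in E$; $\tau^*(G)$ denotes the minimum of $\sum_{v\in V}f(v)$ over all fractional vertex covers. For $E'\subseteq E$ let $G-E'=(V,E\setminus E')$. Define $\mu(G)=\min\{|E'| : E'\subseteq E,\ \tau^*(G-E')<n/2\}$. *)

theory Defs
  imports Complex_Main
begin

definition graph :: "'a set \<Rightarrow> 'a set set \<Rightarrow> bool" where
  "graph V E \<longleftrightarrow> finite V \<and> (\<forall>e\<in>E. e \<subseteq> V \<and> card e = 2)"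

definition degree :: "'a set set \<Rightarrow> 'a \<Rightarrow> nat" where
  "degree E v = card {e \<in> E. v \<in> e}"

text \<open>Minimum degree (meaningful for nonempty V).\<close>
definition min_degree :: "'a set \<Rightarrow> 'a set set \<Rightarrow> nat" where
  "min_degree V E = Min (degree E ` V)"

definition frac_vertex_cover :: "'a set \<Rightarrow> 'a set set \<Rightarrow> ('a \<Rightarrow> real) \<Rightarrow> bool" where
  "frac_vertex_cover V E f \<longleftrightarrow>
     (\<forall>v\<in>V. f v \<ge> 0) \<and> (\<forall>u v. {u, v} \<in> E \<longrightarrow> f u + f v \<ge> 1)"

text \<open>Fractional vertex cover number (the minimum exists by LP theory; we take the infimum).\<close>
definition tau_star :: "'a set \<Rightarrow> 'a set set \<Rightarrow> real" where
  "tau_star V E = Inf {(\<Sum>v\<in>V. f v) | f. frac_vertex_cover V E f}"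

definition mu :: "'a set \<Rightarrow> 'a set set \<Rightarrow> nat" where
  "mu V E = (LEAST k. \<exists>E'. E' \<subseteq> E \<and> card E' = k \<and> tau_star V (E - E') < real (card V) / 2)"

end

theory Submission
  imports Defs
begin


lemma balance:
  fixes g :: "'a \<Rightarrow> real"
  assumes "finite V" "\<forall>x\<ge>0. card {v\<in>V. g v < -x} \<le> card {v\<in>V. g v > x}"
  shows "0 \<le> sum g V"
  using assms
proof (induction "card V" arbitrary: V rule: less_induct)
  case less
  show ?case
  proof (cases "\<exists>v\<in>V. g v < 0")
    case False then show ?thesis by (auto intro: sum_nonneg simp: not_less)
  next
    case True
    then have Vne: "V \<noteq> {}" by auto
    define m where "m = Min (g ` V)"
    have "m \<in> g ` V" unfolding m_def using less.prems(1) Vne by simp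
    then obtain a where a: "a \<in> V" "g a = m" by auto
    have amin: "\<forall>v\<in>V. g a \<le> g v" using a less.prems(1) unfolding m_def by simp
    have ga: "g a < 0" using True amin by force
    have "\<exists>b\<in>V. g b \<ge> - g a"
    proof (rule ccontr)
      assume "\<not> ?thesis"
      then have lt: "\<forall>v\<in>V. g v < - g a" by auto
      define x where "x = Max (insert 0 (g ` V))"
      have x0: "x \<ge> 0" unfolding x_def using less.prems(1) by simp
      have xl: "x < - g a" unfolding x_def using less.prems(1) lt ga by auto
      have "{v\<in>V. g v > x} = {}" unfolding x_def using less.prems(1) by auto
      moreover have "a \<in> {v\<in>V. g v < -x}" using a xl by auto
      then have "card {v\<in>V. g v < -x} \<ge> 1"
        using less.prems(1) by (metis (no_types, lifting) One_nat_def Suc_leI card_gt_0_iff empty_iff finite_subset mem_Collect_eq subsetI)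
      moreover have "card {v\<in>V. g v < -x} \<le> card {v\<in>V. g v > x}" using less.prems(2) x0 by blast
      ultimately show False by (metis card.empty le_zero_eq not_one_le_zero)
    qed
    then obtain b where b: "b \<in> V" "g b \<ge> - g a" by auto
    have ab: "a \<noteq> b" using b ga by auto
    define W where "W = V - {a, b}"
    have fW: "finite W" using less.prems(1) W_def by simp
    have cW: "card W < card V" unfolding W_def using a b less.prems(1)
      by (metis Diff_insert2 card_Diff2_less)
    have condW: "\<forall>x\<ge>0. card {v\<in>W. g v < -x} \<le> card {v\<in>W. g v > x}"
    proof (intro allI impI)
      fix x :: real assume x0: "x \<ge> 0"
      show "card {v\<in>W. g v < -x} \<le> card {v\<in>W. g v > x}"
      proof (cases "x < - g a")
        case True
        have e1: "{v\<in>W. g v < -x} = {v\<in>V. g v < -x} - {a}" unfolding W_def using b x0 ga by auto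
        have e2: "{v\<in>W. g v > x} = {v\<in>V. g v > x} - {b}" unfolding W_def using a x0 ga by auto
        have "a \<in> {v\<in>V. g v < -x}" using a True by auto
        moreover have "b \<in> {v\<in>V. g v > x}" using b True by auto
        moreover have "card {v\<in>V. g v < -x} \<le> card {v\<in>V. g v > x}" using less.prems(2) x0 by auto
        ultimately show ?thesis unfolding e1 e2 using less.prems(1)
          by (simp add: card_Diff_singleton)
      next
        case False
        have "{v\<in>W. g v < -x} = {}" unfolding W_def using amin False by fastforce
        then show ?thesis by (metis card.empty zero_le)
      qed
    qed
    have IH: "0 \<le> sum g W" using less.hyps[OF cW fW condW] .
    have "sum g V = g a + g b + sum g W"
    proof -
      have "sum g V = g a + sum g (V - {a})" using a less.prems(1) by (simp add: sum.remove)
      moreover have "sum g (V - {a}) = g b + sum g (V - {a} - {b})" using b ab less.prems(1) by (simp add: sum.remove)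
      moreover have "V - {a} - {b} = W" unfolding W_def by auto
      ultimately show ?thesis by simp
    qed
    then show ?thesis using IH b by simp
  qed
qed



lemma arith_core:
  fixes s t n k d D :: int
  assumes "1 \<le> s" "0 \<le> t" "t + 1 \<le> s" "s + t \<le> n" "k < d" "0 \<le> k"
    "s * d \<le> D + s * t" "D \<le> 2 * k" "2 * D \<le> 2 * k + s * (s - 1)"
  shows "n \<ge> 2 * d - 3 \<and> (n = 2 * d - 3 \<longrightarrow> k = d - 1)"
proof -
  have b1: "s * (d - t) \<le> 2 * k" using assms(7,8) by (simp add: algebra_simps)
  have b2: "2 * s * (d - t) \<le> 2 * k + s * (s - 1)" using assms(7,9) by (simp add: algebra_simps)
  have t0: "t \<ge> 1"
  proof (rule ccontr)
    assume "\<not> t \<ge> 1" then have "t = 0" using assms by simp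
    then have "s * d \<le> 2 * k" "2 * s * d \<le> 2 * k + s * (s - 1)" using b1 b2 by auto
    show False
    proof (cases "s = 1")
      case True then show ?thesis using \<open>2 * s * d \<le> 2 * k + s * (s - 1)\<close> assms(5) by simp
    next
      case False
      then have "s \<ge> 2" using assms by simp
      then have "2 * d \<le> s * d" using assms mult_right_mono[of 2 s d] by simp
      then show ?thesis using \<open>s * d \<le> 2 * k\<close> assms(5) by simp
    qed
  qed
  have c1: "(t + 1) * (d - t) \<le> 2 * k" if "d \<ge> t"
  proof -
    have "d - t \<ge> 0" using that by simp
    then have "(t + 1) * (d - t) \<le> s * (d - t)" using assms(3) mult_right_mono by blast
    then show ?thesis using b1 by simp
  qed
  show ?thesis
  proof (rule ccontr)
    assume H: "\<not> ?thesis"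
    show False
    proof (cases "n \<le> 2 * d - 4")
      case True
      have dt: "d \<ge> t + 3" using True assms by simp
      show False
      proof (cases "t = 1")
        case True
        then have "2 * (d - 1) \<le> 2 * k" using c1 dt by simp
        then have "k = d - 1" using assms by simp
        have "s * (d - 1) \<le> 2 * (d - 1)" using b1 \<open>k = d - 1\<close> True by simp
        then have "s \<le> 2" using dt True mult_right_le_imp_le[of s "d - 1" 2] by simp
        then have "s = 2" using assms True by simp
        then show False using b2 True \<open>k = d - 1\<close> dt by simp
      next
        case False
        then have t2: "t \<ge> 2" using t0 by simp
        have "(t - 1) * d \<ge> (t - 1) * (t + 3)" using dt t2 by (simp add: mult_left_mono)
        then have "(t + 1) * (d - t) - (2 * d - 2) \<ge> t - 1" by (simp add: algebra_simps)
        then show False using c1 dt assms(5) t2 by simp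
      qed
    next
      case False
      then have "n = 2 * d - 3" "k \<le> d - 2" using H assms(5) by auto
      have dt: "d \<ge> t + 2" using \<open>n = 2 * d - 3\<close> assms by simp
      have "(t - 1) * d \<ge> (t - 1) * (t + 2)" using dt t0 by (simp add: mult_left_mono)
      then have "(t + 1) * (d - t) - (2 * d - 4) \<ge> 2" by (simp add: algebra_simps)
      then show False using c1 dt \<open>k \<le> d - 2\<close> by simp
    qed
  qed
qed


lemma card_filter_sum:
  assumes "finite A"
  shows "card {x\<in>A. P x} = (\<Sum>x\<in>A. if P x then 1 else 0)"
proof -
  have "card {x\<in>A. P x} = (\<Sum>x\<in>{x\<in>A. P x}. 1)" by simp
  also have "\<dots> = (\<Sum>x\<in>A. if P x then 1 else 0)" using assms by (rule sum.inter_filter)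
  finally show ?thesis .
qed

theorem lemma25:
  fixes V :: "'a set" and E :: "'a set set"
  assumes "graph V E" and "V \<noteq> {}"
    and "mu V E < min_degree V E"
  shows "int (card V) \<ge> 2 * int (min_degree V E) - 3
       \<and> (int (card V) = 2 * int (min_degree V E) - 3 \<longrightarrow> mu V E = min_degree V E - 1)"
proof -
  define n where "n = card V"
  define \<delta> where "\<delta> = min_degree V E"
  have finV: "finite V" using assms(1) unfolding graph_def by simp
  have edges: "\<forall>e\<in>E. e \<subseteq> V \<and> card e = 2" using assms(1) unfolding graph_def by simp
  have finE: "finite E"
  proof -
    have Es: "E \<subseteq> Pow V" using edges by auto
    have "finite (Pow V)" using finV by simp
    then show ?thesis by (rule finite_subset[OF Es])
  qed
  have n0: "n > 0" unfolding n_def using finV assms(2) by (simp add: card_gt_0_iff)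
  have degV: "\<forall>v\<in>V. \<delta> \<le> card {e\<in>E. v\<in>e}"
    unfolding \<delta>_def min_degree_def degree_def using finV by simp
  have ex: "\<exists>E'. E' \<subseteq> E \<and> card E' = card E \<and> tau_star V (E - E') < real (card V) / 2"
  proof (intro exI conjI)
    have "tau_star V {} \<le> 0"
      unfolding tau_star_def
    proof (rule cInf_lower)
      show "0 \<in> {(\<Sum>v\<in>V. f v) | f. frac_vertex_cover V {} f}"
        by (rule CollectI, rule exI[of _ "\<lambda>_. 0"]) (simp add: frac_vertex_cover_def)
      show "bdd_below {(\<Sum>v\<in>V. f v) | f. frac_vertex_cover V {} f}"
        by (rule bdd_belowI[of _ 0]) (auto simp: frac_vertex_cover_def intro: sum_nonneg)
    qed
    then show "tau_star V (E - E) < real (card V) / 2" using n0 n_def by simp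
  qed auto
  have ex': "\<exists>k E'. E' \<subseteq> E \<and> card E' = k \<and> tau_star V (E - E') < real (card V) / 2"
    using ex by blast
  obtain E' where E': "E' \<subseteq> E" "card E' = mu V E" "tau_star V (E - E') < real n / 2"
    using LeastI_ex[OF ex'] unfolding mu_def n_def by blast
  define k where "k = mu V E"
  define H where "H = E - E'"
  have finE': "finite E'" using finite_subset[OF E'(1) finE] .
  have "\<exists>y\<in>{(\<Sum>v\<in>V. f v) | f. frac_vertex_cover V H f}. y < real n / 2"
  proof (rule cInf_lessD)
    show "{(\<Sum>v\<in>V. f v) | f. frac_vertex_cover V H f} \<noteq> {}"
      using exI[of "frac_vertex_cover V H" "\<lambda>_. 1"] by (auto simp: frac_vertex_cover_def)
    show "Inf {(\<Sum>v\<in>V. f v) | f. frac_vertex_cover V H f} < real n / 2"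
      using E'(3) unfolding tau_star_def H_def .
  qed
  then obtain f where f: "frac_vertex_cover V H f" "(\<Sum>v\<in>V. f v) < real n / 2" by blast
  define g where "g v = f v - 1/2" for v
  have "sum g V = (\<Sum>v\<in>V. f v) - real n / 2"
    unfolding g_def n_def by (simp add: sum_subtractf)
  then have "sum g V < 0" using f(2) by simp
  then obtain x :: real where x: "x \<ge> 0" "card {v\<in>V. g v > x} < card {v\<in>V. g v < -x}"
    using balance[OF finV] by (meson not_le)
  define S where "S = {v\<in>V. f v < 1/2 - x}"
  define B where "B = {v\<in>V. f v > 1/2 + x}"
  have "{v\<in>V. g v > x} = B" unfolding B_def g_def by auto
  moreover have "{v\<in>V. g v < -x} = S" unfolding S_def g_def by auto
  ultimately have tls: "card B < card S" using x(2) by simp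
  define s where "s = card S"
  define t where "t = card B"
  have SV: "S \<subseteq> V" and BV: "B \<subseteq> V" unfolding S_def B_def by auto
  have finS: "finite S" using finite_subset[OF SV finV] .
  have finB: "finite B" using finite_subset[OF BV finV] .
  have disj: "S \<inter> B = {}" unfolding S_def B_def using x(1) by auto
  have stn: "s + t \<le> n"
  proof -
    have "s + t = card (S \<union> B)" unfolding s_def t_def using disj finS finB by (simp add: card_Un_disjoint)
    also have "\<dots> \<le> n" unfolding n_def using SV BV finV by (intro card_mono) auto
    finally show ?thesis .
  qed
  have key: "\<exists>w\<in>B. e = {v, w}" if v: "v \<in> S" and e: "e \<in> H" "v \<in> e" for v e
  proof -
    have "e \<in> E" using e H_def by auto
    then have "e \<subseteq> V" "card e = 2" using edges by auto
    then obtain a b where ab: "e = {a, b}" "a \<noteq> b" by (auto simp: card_2_iff)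
    then obtain w where w: "e = {v, w}" using e(2) by auto
    have "w \<in> V" using \<open>e \<subseteq> V\<close> w by auto
    have "f v + f w \<ge> 1" using f(1) e(1) w unfolding frac_vertex_cover_def by blast
    then have "w \<in> B" using v \<open>w \<in> V\<close> unfolding S_def B_def by auto
    then show ?thesis using w by blast
  qed
  have hdeg: "card {e\<in>H. v\<in>e} \<le> t" if v: "v \<in> S" for v
  proof -
    have "{e\<in>H. v\<in>e} \<subseteq> (\<lambda>w. {v, w}) ` B" using key[OF v] by blast
    then have "card {e\<in>H. v\<in>e} \<le> card ((\<lambda>w. {v, w}) ` B)" using finB by (intro card_mono) auto
    also have "\<dots> \<le> t" unfolding t_def by (rule card_image_le[OF finB])
    finally show ?thesis .
  qed
  have rdeg: "int \<delta> \<le> int t + int (card {e\<in>E'. v\<in>e})" if v: "v \<in> S" for v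
  proof -
    have "\<delta> \<le> card {e\<in>E. v\<in>e}" using degV v SV by auto
    also have "\<dots> \<le> card ({e\<in>H. v\<in>e} \<union> {e\<in>E'. v\<in>e})"
      using finE finE' by (intro card_mono) (auto simp: H_def)
    also have "\<dots> \<le> card {e\<in>H. v\<in>e} + card {e\<in>E'. v\<in>e}" by (rule card_Un_le)
    finally show ?thesis using hdeg[OF v] by simp
  qed
  define D where "D = (\<Sum>v\<in>S. card {e\<in>E'. v\<in>e})"
  have c1: "int s * int \<delta> \<le> int D + int s * int t"
  proof -
    have "(\<Sum>v\<in>S. int \<delta>) \<le> (\<Sum>v\<in>S. int t + int (card {e\<in>E'. v\<in>e}))"
      using rdeg by (rule sum_mono)
    then show ?thesis unfolding D_def s_def by (simp add: sum.distrib algebra_simps)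
  qed
  have dc: "D = (\<Sum>e\<in>E'. card (e \<inter> S))"
  proof -
    have "D = (\<Sum>v\<in>S. \<Sum>e\<in>E'. if v \<in> e then 1 else 0)"
      unfolding D_def using finE' by (simp add: card_filter_sum)
    also have "\<dots> = (\<Sum>e\<in>E'. \<Sum>v\<in>S. if v \<in> e then 1 else 0)" by (rule sum.swap)
    also have "\<dots> = (\<Sum>e\<in>E'. card {v\<in>S. v \<in> e})" using finS by (simp add: card_filter_sum)
    also have "\<dots> = (\<Sum>e\<in>E'. card (e \<inter> S))" by (intro sum.cong) (auto intro: arg_cong[where f=card])
    finally show ?thesis .
  qed
  have pe: "card (e \<inter> S) \<le> 2 \<and> card (e \<inter> S) \<le> 1 + (if e \<subseteq> S then 1 else 0)" if e: "e \<in> E'" for e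
  proof -
    have ce: "card e = 2" using e E'(1) edges by auto
    then have fe: "finite e" by (metis card.infinite zero_neq_numeral)
    have le2: "card (e \<inter> S) \<le> 2" using card_mono[OF fe, of "e \<inter> S"] ce by auto
    show ?thesis
    proof (cases "e \<subseteq> S")
      case True then show ?thesis using le2 by simp
    next
      case False
      then have "e \<inter> S \<subset> e" by auto
      then have "card (e \<inter> S) < 2" using psubset_card_mono[OF fe] ce by metis
      then show ?thesis using le2 by simp
    qed
  qed
  have c2: "D \<le> 2 * k"
  proof -
    have "D \<le> (\<Sum>e\<in>E'. 2)" unfolding dc using pe by (intro sum_mono) auto
    then show ?thesis using E'(2) k_def by simp
  qed
  have cS: "2 * card {e\<in>E'. e \<subseteq> S} \<le> s * (s - 1)"
  proof -
    have "card {e\<in>E'. e \<subseteq> S} \<le> card {A. A \<subseteq> S \<and> card A = 2}"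
      using finS E'(1) edges by (intro card_mono) auto
    also have "\<dots> = s choose 2" unfolding s_def using n_subsets[OF finS] .
    also have "\<dots> = s * (s - 1) div 2" by (rule choose_two)
    finally show ?thesis by linarith
  qed
  have c3: "D \<le> k + card {e\<in>E'. e \<subseteq> S}"
  proof -
    have "D \<le> (\<Sum>e\<in>E'. 1 + (if e \<subseteq> S then 1 else 0))" unfolding dc using pe by (intro sum_mono) auto
    also have "\<dots> = (\<Sum>e\<in>E'. (1::nat)) + (\<Sum>e\<in>E'. if e \<subseteq> S then 1 else 0)"
      by (rule sum.distrib)
    also have "\<dots> = card E' + card {e\<in>E'. e \<subseteq> S}"
      using card_filter_sum[OF finE', of "\<lambda>e. e \<subseteq> S"] by simp
    finally show ?thesis using E'(2) k_def by simp
  qed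
  have c4: "2 * int D \<le> 2 * int k + int s * (int s - 1)"
  proof -
    have "2 * D \<le> 2 * k + s * (s - 1)" using c3 cS by linarith
    then have "int (2 * D) \<le> int (2 * k + s * (s - 1))" by linarith
    moreover have "s \<ge> 1" using tls s_def by simp
    ultimately show ?thesis by (simp add: of_nat_diff)
  qed
  have "int n \<ge> 2 * int \<delta> - 3 \<and> (int n = 2 * int \<delta> - 3 \<longrightarrow> int k = int \<delta> - 1)"
  proof (rule arith_core[where s="int s" and t="int t" and D="int D"])
    show "1 \<le> int s" using tls s_def by simp
    show "int t + 1 \<le> int s" using tls s_def t_def by simp
    show "int s + int t \<le> int n" using stn by simp
    show "int k < int \<delta>" using assms(3) k_def \<delta>_def by simp
    show "int D \<le> 2 * int k" using c2 by simp
  qed (use c1 c4 in auto)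
  then show ?thesis unfolding n_def \<delta>_def k_def by auto
qed

end
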